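(* Let $\mathbf{X}$ be a finite tournament isomorphic to an induced subtournament of $\mathbf{S}(2)$. Then every extension of $\mathbf{X}$ in $\mathcal{P}_2$ embeds into every extension of $\mathbf{S}(2)$.
   Context: $\mathbf{S}(2)$ is the tournament whose vertices are the points of the unit circle of $\mathbb{C}$ with rational argument, with an arc from $x$ to $y$ iff $0<\arg(y/x)<\pi$. For a structure $\mathbf{A}=(A,<^{\mathbf{A}},P_1,P_2)$ with $<^{\mathbf{A}}$ a linear order on $A$ and $(P_1,P_2)$ a partition of $A$, writing $a\sim b$ when $a,b$ lie in the same part, $p(\mathbf{A})$ is the tournament on $A$ with an arc from $a$ to $b$ iff either ($a\sim b$ and $a<^{\mathbf{A}}b$) or ($a\not\sim b$ and $b<^{\mathbf{A}}a$). An extension of a tournament $\mathbf{X}$ is any such $\mathbf{A}$ with $p(\mathbf{A})=\mathbf{X}$; $\mathcal{P}_2$ is the class of finite such structures. In particular an extension of $\mathbf{S}(2)$ is a structure $(\mathbf{S}(2),<,B_1,B_2)$ with $p$ of it equal to $\mathbf{S}(2)$. An embedding is an order-preserving injection mapping $P_i$ into $B_i$ and the complement of $P_i$ into the complement of $B_i$. *)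

theory Defs
  imports "HOL-Analysis.Analysis"
begin

definition tournament :: "'a set \<Rightarrow> ('a \<Rightarrow> 'a \<Rightarrow> bool) \<Rightarrow> bool" where
  "tournament V E \<longleftrightarrow>
     (\<forall>x\<in>V. \<not> E x x) \<and>
     (\<forall>x\<in>V. \<forall>y\<in>V. x \<noteq> y \<longrightarrow> (E x y \<longleftrightarrow> \<not> E y x))"

definition S2_vert :: "complex set" where
  "S2_vert = {cis (of_rat q) | q. True}"

definition S2_arc :: "complex \<Rightarrow> complex \<Rightarrow> bool" where
  "S2_arc x y \<longleftrightarrow> 0 < Arg (y / x) \<and> Arg (y / x) < pi"

definition strict_linear_order_on :: "'a set \<Rightarrow> ('a \<Rightarrow> 'a \<Rightarrow> bool) \<Rightarrow> bool" where
  "strict_linear_order_on A lt \<longleftrightarrow>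
     (\<forall>x\<in>A. \<not> lt x x) \<and>
     (\<forall>x\<in>A. \<forall>y\<in>A. \<forall>z\<in>A. lt x y \<longrightarrow> lt y z \<longrightarrow> lt x z) \<and>
     (\<forall>x\<in>A. \<forall>y\<in>A. x \<noteq> y \<longrightarrow> lt x y \<or> lt y x)"

definition partition2 :: "'a set \<Rightarrow> 'a set \<Rightarrow> 'a set \<Rightarrow> bool" where
  "partition2 A P1 P2 \<longleftrightarrow> P1 \<union> P2 = A \<and> P1 \<inter> P2 = {}"

definition p_arc :: "('a \<Rightarrow> 'a \<Rightarrow> bool) \<Rightarrow> 'a set \<Rightarrow> 'a set \<Rightarrow> 'a \<Rightarrow> 'a \<Rightarrow> bool" where
  "p_arc lt P1 P2 a b \<longleftrightarrow>
     (((a \<in> P1 \<and> b \<in> P1) \<or> (a \<in> P2 \<and> b \<in> P2)) \<and> lt a b) \<or>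
     (\<not> ((a \<in> P1 \<and> b \<in> P1) \<or> (a \<in> P2 \<and> b \<in> P2)) \<and> lt b a)"

definition is_extension ::
  "'a set \<Rightarrow> ('a \<Rightarrow> 'a \<Rightarrow> bool) \<Rightarrow> ('a \<Rightarrow> 'a \<Rightarrow> bool) \<Rightarrow> 'a set \<Rightarrow> 'a set \<Rightarrow> bool" where
  "is_extension A E lt P1 P2 \<longleftrightarrow>
     strict_linear_order_on A lt \<and> partition2 A P1 P2 \<and>
     (\<forall>a\<in>A. \<forall>b\<in>A. E a b \<longleftrightarrow> p_arc lt P1 P2 a b)"

definition struct_embedding ::
  "('a \<Rightarrow> 'b) \<Rightarrow> 'a set \<Rightarrow> ('a \<Rightarrow> 'a \<Rightarrow> bool) \<Rightarrow> 'a set \<Rightarrow> 'a set \<Rightarrow>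
   'b set \<Rightarrow> ('b \<Rightarrow> 'b \<Rightarrow> bool) \<Rightarrow> 'b set \<Rightarrow> 'b set \<Rightarrow> bool" where
  "struct_embedding f A lt P1 P2 B lt' Q1 Q2 \<longleftrightarrow>
     inj_on f A \<and> f ` A \<subseteq> B \<and>
     (\<forall>a\<in>A. \<forall>b\<in>A. lt a b \<longleftrightarrow> lt' (f a) (f b)) \<and>
     (\<forall>a\<in>A. a \<in> P1 \<longleftrightarrow> f a \<in> Q1) \<and>
     (\<forall>a\<in>A. a \<in> P2 \<longleftrightarrow> f a \<in> Q2)"

end

theory Submission
  imports Defs
begin

lemma slo_irr: "strict_linear_order_on A lt \<Longrightarrow> x \<in> A \<Longrightarrow> \<not> lt x x"
  unfolding strict_linear_order_on_def by simp

lemma slo_trans: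
  assumes "strict_linear_order_on A lt" "x \<in> A" "y \<in> A" "z \<in> A" "lt x y" "lt y z"
  shows "lt x z"
proof -
  have T: "\<forall>x\<in>A. \<forall>y\<in>A. \<forall>z\<in>A. lt x y \<longrightarrow> lt y z \<longrightarrow> lt x z"
    using assms(1) unfolding strict_linear_order_on_def by (rule conjunct1[OF conjunct2])
  show ?thesis using T assms(2-6) by blast
qed

lemma slo_total:
  assumes "strict_linear_order_on A lt" "x \<in> A" "y \<in> A" "x \<noteq> y"
  shows "lt x y \<or> lt y x"
proof -
  have T: "\<forall>x\<in>A. \<forall>y\<in>A. x \<noteq> y \<longrightarrow> lt x y \<or> lt y x"
    using assms(1) unfolding strict_linear_order_on_def by (rule conjunct2[OF conjunct2])
  show ?thesis using T assms(2-4) by blast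
qed

lemma slo_mono:
  assumes A: "strict_linear_order_on A lt" and BA: "B \<subseteq> A"
  shows "strict_linear_order_on B lt"
  unfolding strict_linear_order_on_def
proof (intro conjI ballI impI)
  fix x assume "x \<in> B" then show "\<not> lt x x" using slo_irr[OF A] BA by blast
next
  fix x y z assume "x \<in> B" "y \<in> B" "z \<in> B" "lt x y" "lt y z"
  then show "lt x z" using slo_trans[OF A, of x y z] BA by blast
next
  fix x y assume "x \<in> B" "y \<in> B" "x \<noteq> y"
  then show "lt x y \<or> lt y x" using slo_total[OF A, of x y] BA by blast
qed

lemma arc_Im: "S2_arc x y \<longleftrightarrow> 0 < Im (y / x)"
  unfolding S2_arc_def using Arg_lt_pi by blast

lemma Im_inv_pos: "0 < Im (inverse z) \<longleftrightarrow> Im z < 0"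
proof -
  have "Im (inverse z) = - Im z / ((Re z)^2 + (Im z)^2)" by (simp add: power2_eq_square)
  moreover have "Im z \<noteq> 0 \<Longrightarrow> (Re z)^2 + (Im z)^2 > 0"
    by (simp add: sum_power2_gt_zero_iff)
  ultimately show ?thesis
    by (cases "Im z = 0") (auto simp: zero_less_divide_iff divide_less_0_iff)
qed

lemma arc_swap: "S2_arc y x \<longleftrightarrow> Im (y / x) < 0"
proof -
  have "x / y = inverse (y / x)" by simp
  then show ?thesis unfolding arc_Im[of y x] by (metis Im_inv_pos)
qed

lemma arc_negneg [simp]: "S2_arc (-x) (-y) \<longleftrightarrow> S2_arc x y"
  unfolding arc_Im by simp

lemma arc_neg1: "S2_arc (-x) y \<longleftrightarrow> S2_arc y x"
  unfolding arc_swap[of y x] arc_Im[of "-x" y] by simp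

lemma arc_neg2: "S2_arc x (-y) \<longleftrightarrow> S2_arc y x"
  unfolding arc_swap[of y x] arc_Im[of x "-y"] by simp

lemma arc_cis: "S2_arc (cis a) (cis b) \<longleftrightarrow> 0 < sin (b - a)"
  unfolding arc_Im by (simp add: cis_divide)

lemma S2_cis: "w \<in> S2_vert \<Longrightarrow> \<exists>r. w = cis r"
  unfolding S2_vert_def by auto

lemma S2_nz: "w \<in> S2_vert \<Longrightarrow> w \<noteq> 0"
  unfolding S2_vert_def by auto

lemma rat_cis: "r \<in> \<rat> \<Longrightarrow> cis r \<in> S2_vert"
  unfolding S2_vert_def by (auto elim!: Rats_cases)

lemma between_exists:
  fixes a g :: real
  assumes "0 < sin (g - a)"
  shows "(\<exists>r\<in>\<rat>. 0 < sin (r - a) \<and> 0 < sin (g - r)) \<and>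
         (\<exists>r\<in>\<rat>. 0 < sin (r + pi - a) \<and> 0 < sin (g - (r + pi)))"
proof -
  define d where "d = Arg (cis (g - a))"
  have "0 < d \<and> d < pi" unfolding d_def using assms Arg_lt_pi by simp
  then have d0: "0 < d" and d1: "d < pi" by auto
  have "cis d = cis (g - a)" unfolding d_def by (simp add: cis_Arg)
  note cc = this
  have sd: "sin d = sin (g - a)" and cd: "cos d = cos (g - a)"
    using arg_cong[OF cc, of Im] arg_cong[OF cc, of Re] by simp_all
  have key: "0 < sin \<tau> \<and> 0 < sin (g - (a + \<tau>))" if "0 < \<tau>" "\<tau> < d" for \<tau>
  proof
    show "0 < sin \<tau>" using that d1 by (intro sin_gt_zero) auto
    have "g - (a + \<tau>) = (g - a) - \<tau>" by simp
    then have "sin (g - (a + \<tau>)) = sin (d - \<tau>)"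
      by (simp only: sin_diff sd cd)
    also have "\<dots> > 0" using that d1 by (intro sin_gt_zero) auto
    finally show "0 < sin (g - (a + \<tau>))" .
  qed
  obtain r1 where r1: "r1 \<in> \<rat>" "a < r1" "r1 < a + d"
    using Rats_dense_in_real[of a "a + d"] d0 by auto
  obtain r2 where r2: "r2 \<in> \<rat>" "a - pi < r2" "r2 < a - pi + d"
    using Rats_dense_in_real[of "a - pi" "a - pi + d"] d0 by auto
  have 1: "0 < sin (r1 - a) \<and> 0 < sin (g - r1)"
    using key[of "r1 - a"] r1 by simp
  have 2: "0 < sin (r2 + pi - a) \<and> 0 < sin (g - (r2 + pi))"
    using key[of "r2 + pi - a"] r2 by simp
  show ?thesis using 1 2 r1 r2 by blast
qed

lemma L:
  assumes ext: "is_extension S2_vert S2_arc lt B1 B2" and u: "u \<in> S2_vert" and v: "v \<in> S2_vert"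
  shows "lt u v \<longleftrightarrow> S2_arc (if u \<in> B1 then u else -u) (if v \<in> B1 then v else -v)"
proof -
  have E: "\<And>a b. a \<in> S2_vert \<Longrightarrow> b \<in> S2_vert \<Longrightarrow> S2_arc a b \<longleftrightarrow> p_arc lt B1 B2 a b"
    using ext unfolding is_extension_def by blast
  have P: "B1 \<union> B2 = S2_vert" "B1 \<inter> B2 = {}" using ext unfolding is_extension_def partition2_def by auto
  show ?thesis
    using E[OF u v] E[OF v u] P u v
    by (cases "u \<in> B1"; cases "v \<in> B1") (auto simp: p_arc_def arc_neg1 arc_neg2)
qed

lemma phi_cis:
  assumes "u \<in> S2_vert" shows "\<exists>al. (if u \<in> B1 then u else -u) = cis al"
proof -
  obtain r where "u = cis r" using S2_cis[OF assms] by blast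
  then show ?thesis by (auto simp: minus_cis)
qed

lemma dens:
  assumes ext: "is_extension S2_vert S2_arc lt B1 B2" and x: "x \<in> S2_vert" and z: "z \<in> S2_vert"
    and xz: "lt x z"
  shows "(\<exists>y\<in>B1. lt x y \<and> lt y z) \<and> (\<exists>y\<in>B2. lt x y \<and> lt y z)"
proof -
  define phi where "phi u = (if u \<in> B1 then u else -u)" for u
  have Lp: "lt u v \<longleftrightarrow> S2_arc (phi u) (phi v)" if "u \<in> S2_vert" "v \<in> S2_vert" for u v
    unfolding phi_def using L[OF ext that] .
  have P: "B1 \<union> B2 = S2_vert" "B1 \<inter> B2 = {}" using ext unfolding is_extension_def partition2_def by auto
  have SL: "strict_linear_order_on S2_vert lt" using ext unfolding is_extension_def by auto
  have irr: "\<not> lt u u" if "u \<in> S2_vert" for u using slo_irr[OF SL that] .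
  have tr: "lt u w" if "u \<in> S2_vert" "v \<in> S2_vert" "w \<in> S2_vert" "lt u v" "lt v w" for u v w
    using slo_trans[OF SL that] .
  have core: "phi w = s \<and> lt x w \<and> lt w z"
    if w: "w \<in> S2_vert" and s1: "S2_arc (phi x) s" and s2: "S2_arc s (phi z)"
      and ws: "phi w = s \<or> phi w = - s" for w s
  proof (cases "phi w = s")
    case True
    then show ?thesis using Lp[OF x w] Lp[OF w z] s1 s2 by simp
  next
    case False
    then have "phi w = - s" using ws by blast
    then have "lt w x" "lt z w" using Lp[OF w x] Lp[OF z w] s1 s2 by (auto simp: arc_neg1 arc_neg2)
    then have False using tr[OF x z w xz] irr[OF x] tr[OF x w x] w by blast
    then show ?thesis ..
  qed
  obtain al where al: "phi x = cis al" using phi_cis[OF x] unfolding phi_def by blast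
  obtain ga where ga: "phi z = cis ga" using phi_cis[OF z] unfolding phi_def by blast
  have "S2_arc (phi x) (phi z)" using Lp[OF x z] xz by simp
  then have "0 < sin (ga - al)" using al ga arc_cis by simp
  from between_exists[OF this] obtain r1 r2 where
    r1: "r1 \<in> \<rat>" "0 < sin (r1 - al)" "0 < sin (ga - r1)" and
    r2: "r2 \<in> \<rat>" "0 < sin (r2 + pi - al)" "0 < sin (ga - (r2 + pi))" by blast
  have w1: "cis r1 \<in> S2_vert" using rat_cis[OF r1(1)] .
  have "phi (cis r1) = cis r1 \<and> lt x (cis r1) \<and> lt (cis r1) z"
    by (rule core[OF w1]) (use r1 al ga arc_cis in \<open>auto simp: phi_def\<close>)
  moreover have "cis r1 \<noteq> - cis r1" using S2_nz[OF w1] by (simp add: minus_equation_iff[symmetric] equal_neg_zero)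
  ultimately have A: "\<exists>y\<in>B1. lt x y \<and> lt y z" unfolding phi_def by (metis)
  have w2: "cis r2 \<in> S2_vert" using rat_cis[OF r2(1)] .
  have "phi (cis r2) = - cis r2 \<and> lt x (cis r2) \<and> lt (cis r2) z"
  proof (rule core[OF w2])
    show "S2_arc (phi x) (- cis r2)" using r2 al ga arc_cis by (simp add: minus_cis)
    show "S2_arc (- cis r2) (phi z)" using r2 al ga arc_cis by (simp add: minus_cis)
    show "phi (cis r2) = - cis r2 \<or> phi (cis r2) = - (- cis r2)" by (simp add: phi_def)
  qed
  moreover have "cis r2 \<noteq> - cis r2" using S2_nz[OF w2] by (simp add: minus_equation_iff[symmetric] equal_neg_zero)
  ultimately have "cis r2 \<notin> B1 \<and> lt x (cis r2) \<and> lt (cis r2) z" unfolding phi_def by auto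
  then have B: "\<exists>y\<in>B2. lt x y \<and> lt y z" using P w2 by blast
  show ?thesis using A B by blast
qed

lemma finite_max:
  assumes "finite A" "A \<noteq> {}" "strict_linear_order_on A lt"
  shows "\<exists>m\<in>A. \<forall>y\<in>A. y \<noteq> m \<longrightarrow> lt y m"
  using assms
proof (induction A rule: finite_ne_induct)
  case (singleton x) then show ?case by auto
next
  case (insert x F)
  have "strict_linear_order_on F lt" using insert.prems slo_mono by blast
  then obtain m where m: "m \<in> F" "\<forall>y\<in>F. y \<noteq> m \<longrightarrow> lt y m" using insert.IH by blast
  have SL: "strict_linear_order_on (insert x F) lt" by fact
  show ?case
  proof (cases "lt m x")
    case True
    have "\<forall>y\<in>insert x F. y \<noteq> x \<longrightarrow> lt y x"
    proof (intro ballI impI)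
      fix y assume y: "y \<in> insert x F" "y \<noteq> x"
      then have yF: "y \<in> F" by blast
      show "lt y x"
      proof (cases "y = m")
        case True then show ?thesis using \<open>lt m x\<close> by simp
      next
        case False
        then have "lt y m" using m yF by blast
        then show ?thesis using slo_trans[OF SL, of y m x] \<open>lt m x\<close> yF m(1) by blast
      qed
    qed
    then show ?thesis by blast
  next
    case False
    have "x \<noteq> m" using insert.hyps m(1) by blast
    then have "lt x m" using False m(1) slo_total[OF SL, of x m] by blast
    then show ?thesis using m by auto
  qed
qed

lemma embed:
  assumes SLB: "strict_linear_order_on B lt'" and PB: "B1 \<subseteq> B" "B2 \<subseteq> B" "B1 \<inter> B2 = {}"
    and dens: "\<forall>x\<in>B. \<forall>z\<in>B. lt' x z \<longrightarrow> (\<exists>y\<in>B1. lt' x y \<and> lt' y z) \<and> (\<exists>y\<in>B2. lt' x y \<and> lt' y z)"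
  shows "card A = n \<Longrightarrow> finite A \<Longrightarrow> strict_linear_order_on A lt \<Longrightarrow> (\<forall>x\<in>A. x \<in> P1 \<longleftrightarrow> x \<notin> P2) \<Longrightarrow>
    a \<in> B \<Longrightarrow> b \<in> B \<Longrightarrow> lt' a b \<Longrightarrow>
    \<exists>f. struct_embedding f A lt P1 P2 B lt' B1 B2 \<and> (\<forall>x\<in>A. lt' a (f x) \<and> lt' (f x) b)"
proof (induction n arbitrary: A a b)
  case 0
  then have "A = {}" by auto
  then show ?case unfolding struct_embedding_def by auto
next
  case (Suc n)
  have irrB: "\<not> lt' u u" if "u \<in> B" for u using slo_irr[OF SLB that] .
  have trB: "lt' u w" if "u \<in> B" "v \<in> B" "w \<in> B" "lt' u v" "lt' v w" for u v w
    using slo_trans[OF SLB that] .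
  have irrA: "\<not> lt u u" if "u \<in> A" for u using slo_irr[OF Suc.prems(3) that] .
  have trA: "lt u w" if "u \<in> A" "v \<in> A" "w \<in> A" "lt u v" "lt v w" for u v w
    using slo_trans[OF Suc.prems(3) that] .
  have "A \<noteq> {}" using Suc.prems(1) by auto
  then obtain m where m: "m \<in> A" "\<forall>y\<in>A. y \<noteq> m \<longrightarrow> lt y m"
    using finite_max[OF Suc.prems(2) _ Suc.prems(3)] by blast
  define A' where "A' = A - {m}"
  have cA': "card A' = n" using Suc.prems(1) m(1) unfolding A'_def by simp
  have fA': "finite A'" using Suc.prems(2) unfolding A'_def by simp
  have SLA': "strict_linear_order_on A' lt" using slo_mono[OF Suc.prems(3)] unfolding A'_def by blast
  have PA': "\<forall>x\<in>A'. x \<in> P1 \<longleftrightarrow> x \<notin> P2" using Suc.prems(4) unfolding A'_def by blast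
  have densR: "(\<exists>y\<in>B1. lt' x y \<and> lt' y z) \<and> (\<exists>y\<in>B2. lt' x y \<and> lt' y z)"
    if "x \<in> B" "z \<in> B" "lt' x z" for x z using dens that by blast
  obtain c where c: "c \<in> B1" "lt' a c" "lt' c b" using densR[OF Suc.prems(5-7)] by blast
  have cB: "c \<in> B" using c PB by blast
  obtain f0 where f0: "struct_embedding f0 A' lt P1 P2 B lt' B1 B2" "\<forall>x\<in>A'. lt' a (f0 x) \<and> lt' (f0 x) c"
    using Suc.IH[OF cA' fA' SLA' PA' Suc.prems(5) cB c(2)] by blast
  obtain d where d: "d \<in> B" "lt' c d" "lt' d b" "m \<in> P1 \<longleftrightarrow> d \<in> B1" "m \<in> P2 \<longleftrightarrow> d \<in> B2"
  proof (cases "m \<in> P1")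
    case True
    obtain d where d1: "d \<in> B1" "lt' c d" "lt' d b" using densR[OF cB Suc.prems(6) c(3)] by blast
    have m2: "m \<notin> P2" using True Suc.prems(4) m(1) by blast
    have d2: "d \<notin> B2" using d1(1) PB(3) by blast
    show ?thesis by (rule that[of d]) (use d1 True m2 d2 PB(1) in auto)
  next
    case False
    obtain d where d1: "d \<in> B2" "lt' c d" "lt' d b" using densR[OF cB Suc.prems(6) c(3)] by blast
    have m2: "m \<in> P2" using False Suc.prems(4) m(1) by blast
    have d2: "d \<notin> B1" using d1(1) PB(3) by blast
    show ?thesis by (rule that[of d]) (use d1 False m2 d2 PB(2) in auto)
  qed
  define f where "f = f0(m := d)"
  have E0: "inj_on f0 A'" "f0 ` A' \<subseteq> B" "\<forall>x\<in>A'. \<forall>y\<in>A'. lt x y \<longleftrightarrow> lt' (f0 x) (f0 y)"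
    "\<forall>x\<in>A'. x \<in> P1 \<longleftrightarrow> f0 x \<in> B1" "\<forall>x\<in>A'. x \<in> P2 \<longleftrightarrow> f0 x \<in> B2"
    using f0(1) unfolding struct_embedding_def by auto
  have f0B: "f0 x \<in> B" if "x \<in> A'" for x using E0(2) that by blast
  have A_eq: "A = insert m A'" using m(1) unfolding A'_def by blast
  have mA': "m \<notin> A'" unfolding A'_def by blast
  have fx: "f x = f0 x" if "x \<in> A'" for x using that mA' unfolding f_def by auto
  have fm: "f m = d" unfolding f_def by simp
  have below: "lt' (f0 x) d" if "x \<in> A'" for x
    using trB[OF f0B[OF that] cB d(1)] f0(2) that d(2) by blast
  have bnd: "\<forall>x\<in>A. lt' a (f x) \<and> lt' (f x) b"
  proof
    fix x assume "x \<in> A"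
    show "lt' a (f x) \<and> lt' (f x) b"
    proof (cases "x = m")
      case True then show ?thesis using fm trB[OF Suc.prems(5) cB d(1)] c(2) d by simp
    next
      case False
      then have x': "x \<in> A'" using \<open>x \<in> A\<close> unfolding A'_def by blast
      then show ?thesis using fx f0(2) trB[OF f0B[OF x'] cB Suc.prems(6)] c(3) by simp
    qed
  qed
  have emb: "struct_embedding f A lt P1 P2 B lt' B1 B2"
    unfolding struct_embedding_def
  proof (intro conjI)
    show "inj_on f A"
      unfolding A_eq
    proof (rule inj_on_insert[THEN iffD2], intro conjI)
      show "inj_on f A'" using E0(1) fx inj_on_cong by metis
      show "f m \<notin> f ` (A' - {m})"
      proof
        assume "f m \<in> f ` (A' - {m})"
        then obtain x where x: "x \<in> A'" "f m = f x" by blast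
        then have "d = f0 x" using fm fx by simp
        then show False using below[OF x(1)] irrB[OF d(1)] by simp
      qed
    qed
    show "f ` A \<subseteq> B" unfolding A_eq using fm fx d(1) f0B by auto
    show "\<forall>x\<in>A. \<forall>y\<in>A. lt x y \<longleftrightarrow> lt' (f x) (f y)"
    proof (intro ballI)
      fix x y assume x: "x \<in> A" and y: "y \<in> A"
      show "lt x y \<longleftrightarrow> lt' (f x) (f y)"
      proof (cases "x = m"; cases "y = m")
        assume "x = m" "y = m" then show ?thesis using irrA[OF m(1)] irrB[OF d(1)] fm by simp
      next
        assume xm: "x = m" and ym: "y \<noteq> m"
        then have y': "y \<in> A'" using y unfolding A'_def by blast
        have "\<not> lt m y" using m(2) ym y irrA[OF m(1)] trA[OF m(1) y m(1)] by blast
        moreover have "\<not> lt' d (f0 y)" using below[OF y'] irrB[OF d(1)] trB[OF d(1) f0B[OF y'] d(1)] by blast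
        ultimately show ?thesis using xm fm fx[OF y'] by simp
      next
        assume xm: "x \<noteq> m" and ym: "y = m"
        then have x': "x \<in> A'" using x unfolding A'_def by blast
        show ?thesis using m(2) xm x below[OF x'] ym fm fx[OF x'] by simp
      next
        assume xm: "x \<noteq> m" and ym: "y \<noteq> m"
        then have x': "x \<in> A'" and y': "y \<in> A'" using x y unfolding A'_def by blast+
        show ?thesis using E0(3) x' y' fx by simp
      qed
    qed
    show "\<forall>x\<in>A. x \<in> P1 \<longleftrightarrow> f x \<in> B1"
      unfolding A_eq using fm fx d(4) E0(4) by auto
    show "\<forall>x\<in>A. x \<in> P2 \<longleftrightarrow> f x \<in> B2"
      unfolding A_eq using fm fx d(5) E0(5) by auto
  qed
  show ?case using emb bnd by blast
qed


theorem lemma5: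
  fixes V :: "'a set" and E :: "'a \<Rightarrow> 'a \<Rightarrow> bool"
  assumes "finite V" and "tournament V E"
    and "\<exists>h. inj_on h V \<and> h ` V \<subseteq> S2_vert \<and>
              (\<forall>a\<in>V. \<forall>b\<in>V. E a b \<longleftrightarrow> S2_arc (h a) (h b))"
  shows "\<forall>lt P1 P2. is_extension V E lt P1 P2 \<longrightarrow>
           (\<forall>lt' B1 B2. is_extension S2_vert S2_arc lt' B1 B2 \<longrightarrow>
              (\<exists>f. struct_embedding f V lt P1 P2 S2_vert lt' B1 B2))"
proof (intro allI impI)
  fix lt P1 P2 lt' B1 B2
  assume extV: "is_extension V E lt P1 P2" and extS: "is_extension S2_vert S2_arc lt' B1 B2"
  have SLV: "strict_linear_order_on V lt" and PV: "partition2 V P1 P2"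
    using extV unfolding is_extension_def by auto
  have PV': "\<forall>x\<in>V. x \<in> P1 \<longleftrightarrow> x \<notin> P2" using PV unfolding partition2_def by blast
  have SLB: "strict_linear_order_on S2_vert lt'" and PB: "partition2 S2_vert B1 B2"
    using extS unfolding is_extension_def by auto
  have PB': "B1 \<subseteq> S2_vert" "B2 \<subseteq> S2_vert" "B1 \<inter> B2 = {}" using PB unfolding partition2_def by auto
  have D: "\<forall>x\<in>S2_vert. \<forall>z\<in>S2_vert. lt' x z \<longrightarrow> (\<exists>y\<in>B1. lt' x y \<and> lt' y z) \<and> (\<exists>y\<in>B2. lt' x y \<and> lt' y z)"
    using dens[OF extS] by blast
  have c0: "cis 0 \<in> S2_vert" and c1: "cis 1 \<in> S2_vert" using rat_cis[of 0] rat_cis[of 1] by auto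
  have "sin (1::real) > 0" using pi_gt3 by (intro sin_gt_zero) auto
  then have "cis 0 \<noteq> cis 1"
  proof (intro notI)
    assume "cis 0 = cis 1"
    then have "Im (cis 0) = Im (cis 1)" by (rule arg_cong)
    then have "sin (0::real) = sin 1" by (simp only: cis.sel)
    with \<open>sin (1::real) > 0\<close> show False by simp
  qed
  then obtain a b where ab: "a \<in> S2_vert" "b \<in> S2_vert" "lt' a b"
    using slo_total[OF SLB c0 c1] c0 c1 by blast
  show "\<exists>f. struct_embedding f V lt P1 P2 S2_vert lt' B1 B2"
    using embed[OF SLB PB' D refl assms(1) SLV PV' ab] by blast
qed

end
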